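(* For every instance of (edge-weighted) online stochastic matching in the Poisson arrival model and every level $\ell\ge0$, the expected weight of a maximum-weight matching of the realized bipartite graph is at most the optimal value of the $\ell$-th level Poisson Matching LP.
   Context: Poisson arrival model: $I$ is a finite set of online types and $J$ a finite set of offline vertices, with edges $E\subseteq I\times J$ and weights $w_{ij}>0$. Type $i$ arrives by an independent Poisson process of rate $\lambda_i>0$ on $[0,1]$, and $\lambda_S=\sum_{i\in S}\lambda_i$. $P_k(\lambda)=e^{-\lambda}\sum_{m=0}^k\lambda^m/m!$ is the Poisson CDF. For $\ell\ge1$, the $\ell$-th level Poisson Matching LP is: maximize $\sum_{(i,j)\in E}w_{ij}x_{ij}$ subject to - $x_{ij}\ge0$; - $\sum_{j}x_{ij}\le\lambda_i$ for all $i\in I$; - for every $1\le m\le\ell$, every $S\subseteq I$ and every $T\subseteq J$ with $|T|=m$: $\sum_{i\in S}\sum_{j\in T}x_{ij}\le\sum_{k=1}^m(1-P_{k-1}(\lambda_S))$. Here $x_{ij}=0$ for non-edges. The $0$-th level is the matching LP: maximize $\sum w_{ij}x_{ij}$ subject to $\sum_jx_{ij}\le\lambda_i$, $\sum_ix_{ij}\le1$, and $x\ge0$. *)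

theory Defs
  imports "HOL-Probability.Probability"
begin

definition poisson_cdf :: "nat \<Rightarrow> real \<Rightarrow> real" where
  "poisson_cdf k lam = exp (- lam) * (\<Sum>m\<le>k. lam ^ m / fact m)"

definition poisson_lp_feasible ::
  "'i set \<Rightarrow> 'j set \<Rightarrow> ('i \<times> 'j) set \<Rightarrow> ('i \<Rightarrow> real) \<Rightarrow> nat \<Rightarrow> ('i \<Rightarrow> 'j \<Rightarrow> real) set" where
  "poisson_lp_feasible I J E lam l =
     {x. (\<forall>i j. x i j \<ge> 0) \<and> (\<forall>i j. (i, j) \<notin> E \<longrightarrow> x i j = 0) \<and>
         (\<forall>i\<in>I. (\<Sum>j\<in>J. x i j) \<le> lam i) \<and>
         (if l = 0 then (\<forall>j\<in>J. (\<Sum>i\<in>I. x i j) \<le> 1)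
          else (\<forall>m. 1 \<le> m \<and> m \<le> l \<longrightarrow> (\<forall>S\<subseteq>I. \<forall>T\<subseteq>J. card T = m \<longrightarrow>
                 (\<Sum>i\<in>S. \<Sum>j\<in>T. x i j) \<le>
                 (\<Sum>k=1..m. 1 - poisson_cdf (k - 1) (\<Sum>i\<in>S. lam i)))))}"

definition lp_objective :: "('i \<times> 'j) set \<Rightarrow> ('i \<Rightarrow> 'j \<Rightarrow> real) \<Rightarrow> ('i \<Rightarrow> 'j \<Rightarrow> real) \<Rightarrow> real" where
  "lp_objective E w x = (\<Sum>(i, j)\<in>E. w i j * x i j)"

definition poisson_lp_opt ::
  "'i set \<Rightarrow> 'j set \<Rightarrow> ('i \<times> 'j) set \<Rightarrow> ('i \<Rightarrow> 'j \<Rightarrow> real) \<Rightarrow> ('i \<Rightarrow> real) \<Rightarrow> nat \<Rightarrow> real" where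
  "poisson_lp_opt I J E w lam l = (SUP x \<in> poisson_lp_feasible I J E lam l. lp_objective E w x)"

text \<open>Realized bipartite graph for arrival counts N: online vertices (i,k) with k < N i
  (the k-th arrival of type i), offline vertices J, edge ((i,k),j) iff (i,j) in E,
  with weight w i j.\<close>
definition realized_matchings ::
  "('i \<times> 'j) set \<Rightarrow> ('i \<Rightarrow> nat) \<Rightarrow> ((('i \<times> nat) \<times> 'j) set) set" where
  "realized_matchings E N =
     {M. M \<subseteq> {((i, k), j). (i, j) \<in> E \<and> k < N i} \<and>
         (\<forall>e\<in>M. \<forall>e'\<in>M. fst e = fst e' \<longrightarrow> e = e') \<and>
         (\<forall>e\<in>M. \<forall>e'\<in>M. snd e = snd e' \<longrightarrow> e = e')}"

definition matching_weight :: "('i \<Rightarrow> 'j \<Rightarrow> real) \<Rightarrow> (('i \<times> nat) \<times> 'j) set \<Rightarrow> real" where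
  "matching_weight w M = (\<Sum>((i, k), j)\<in>M. w i j)"

definition max_weight_matching :: "('i \<times> 'j) set \<Rightarrow> ('i \<Rightarrow> 'j \<Rightarrow> real) \<Rightarrow> ('i \<Rightarrow> nat) \<Rightarrow> real" where
  "max_weight_matching E w N = Max (matching_weight w ` realized_matchings E N)"

definition arrival_counts :: "'i set \<Rightarrow> ('i \<Rightarrow> real) \<Rightarrow> ('i \<Rightarrow> nat) pmf" where
  "arrival_counts I lam = Pi_pmf I 0 (\<lambda>i. poisson_pmf (lam i))"

end

theory Submission
  imports Defs
begin


lemma poisson_conv:
  assumes a: "(a::real) > 0" and b: "b > 0"
  shows "map_pmf (\<lambda>(x,y). x + y) (pair_pmf (poisson_pmf a) (poisson_pmf b)) = poisson_pmf (a + b)"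
proof (rule pmf_eqI)
  fix n :: nat
  have pre: "(\<lambda>(x,y). x + y) -` {n} = (\<lambda>k. (k, n - k)) ` {..n}"
    by (auto simp: image_iff) 
  have inj: "inj_on (\<lambda>k::nat. (k, n - k)) {..n}" by (auto simp: inj_on_def)
  have "pmf (map_pmf (\<lambda>(x,y). x + y) (pair_pmf (poisson_pmf a) (poisson_pmf b))) n
      = (\<Sum>k\<le>n. pmf (poisson_pmf a) k * pmf (poisson_pmf b) (n - k))"
    by (simp add: pmf_map pre measure_measure_pmf_finite sum.reindex[OF inj] pmf_pair)
  also have "\<dots> = (\<Sum>k\<le>n. exp (-(a+b)) / fact n * (of_nat (n choose k) * a ^ k * b ^ (n - k)))"
  proof (rule sum.cong[OF refl])
    fix k assume "k \<in> {..n}"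
    then have kn: "k \<le> n" by simp
    show "pmf (poisson_pmf a) k * pmf (poisson_pmf b) (n - k) =
          exp (-(a+b)) / fact n * (of_nat (n choose k) * a ^ k * b ^ (n - k))"
      using a b by (simp add: binomial_fact[OF kn] exp_add[symmetric] field_simps exp_diff)
  qed
  also have "\<dots> = exp (-(a+b)) / fact n * (a + b) ^ n"
    unfolding binomial_ring sum_distrib_left by (rule refl)
  also have "\<dots> = pmf (poisson_pmf (a+b)) n"
    using a b by simp
  finally show "pmf (map_pmf (\<lambda>(x,y). x + y) (pair_pmf (poisson_pmf a) (poisson_pmf b))) n = pmf (poisson_pmf (a + b)) n" .
qed

lemma sum_Pi_poisson:
  assumes "finite S" "S \<noteq> {}" "\<forall>i\<in>S. lam i > (0::real)"
  shows "map_pmf (\<lambda>N. \<Sum>i\<in>S. N i) (Pi_pmf S 0 (\<lambda>i. poisson_pmf (lam i))) = poisson_pmf (\<Sum>i\<in>S. lam i)"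
  using assms
proof (induction S rule: finite_ne_induct)
  case (singleton x)
  show ?case by (simp add: Pi_pmf_singleton pmf.map_comp o_def)
next
  case (insert x F)
  have pos: "(\<Sum>i\<in>F. lam i) > 0" using insert by (intro sum_pos) auto
  have "map_pmf (\<lambda>N. \<Sum>i\<in>insert x F. N i) (Pi_pmf (insert x F) 0 (\<lambda>i. poisson_pmf (lam i)))
     = map_pmf (\<lambda>(y,f). y + (\<Sum>i\<in>F. f i)) (pair_pmf (poisson_pmf (lam x)) (Pi_pmf F 0 (\<lambda>i. poisson_pmf (lam i))))"
  proof -
    have e: "(\<Sum>i\<in>insert x F. (f(x:=y)) i) = y + (\<Sum>i\<in>F. f i)" for y f
    proof -
      have "(\<Sum>i\<in>F. (f(x:=y)) i) = (\<Sum>i\<in>F. f i)"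
        using insert(3) by (intro sum.cong) auto
      then show ?thesis using insert(1,3) by (simp add: sum.insert del: fun_upd_apply) simp
    qed
    have e2: "sum (f(x:=y)) F = sum f F" for y f
      using insert(3) by (intro sum.cong) auto
    show ?thesis
      using insert(1,3) by (subst Pi_pmf_insert) (auto simp del: fun_upd_apply simp: pmf.map_comp o_def case_prod_unfold e2 fun_upd_same)
  qed
  also have "\<dots> = map_pmf (\<lambda>(x,y). x + y) (map_pmf (\<lambda>(y,f). (id y, (\<Sum>i\<in>F. f i))) (pair_pmf (poisson_pmf (lam x)) (Pi_pmf F 0 (\<lambda>i. poisson_pmf (lam i)))))"
    by (simp add: pmf.map_comp o_def case_prod_unfold)
  also have "\<dots> = map_pmf (\<lambda>(x,y). x + y) (pair_pmf (poisson_pmf (lam x)) (poisson_pmf (\<Sum>i\<in>F. lam i)))"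
    using insert by (subst map_pair) simp
  also have "\<dots> = poisson_pmf (lam x + (\<Sum>i\<in>F. lam i))"
    using insert pos by (intro poisson_conv) auto
  finally show ?case using insert by (simp add: sum.insert)
qed




lemma pmf_integrable_bounded:
  fixes f :: "'a \<Rightarrow> real"
  assumes "\<And>x. \<bar>f x\<bar> \<le> B"
  shows "integrable (measure_pmf p) f"
  using assms by (intro measure_pmf.integrable_const_bound[where B=B]) auto

lemma min_as_sum: "real (min n m) = (\<Sum>k=1..m. 1 - indicator {..k-1} n)"
proof (induction m)
  case 0 then show ?case by simp
next
  case (Suc m)
  have "real (min n (Suc m)) = real (min n m) + (1 - indicator {..m} n)"
    by (auto simp: indicator_def)
  then show ?case using Suc by simp
qed

lemma poisson_min_expectation:
  assumes mu: "(mu::real) > 0"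
  shows "measure_pmf.expectation (poisson_pmf mu) (\<lambda>n. real (min n m)) =
         (\<Sum>k=1..m. 1 - poisson_cdf (k - 1) mu)"
proof -
  have int: "integrable (measure_pmf (poisson_pmf mu)) (\<lambda>n. 1 - indicator {..k-1} n :: real)" for k
    by (rule pmf_integrable_bounded[where B=1]) (auto simp: indicator_def)
  have "measure_pmf.expectation (poisson_pmf mu) (\<lambda>n. real (min n m)) =
        measure_pmf.expectation (poisson_pmf mu) (\<lambda>n. \<Sum>k=1..m. 1 - indicator {..k-1} n)"
    by (simp only: min_as_sum)
  also have "\<dots> = (\<Sum>k=1..m. measure_pmf.expectation (poisson_pmf mu) (\<lambda>n. 1 - indicator {..k-1} n))"
    by (rule Bochner_Integration.integral_sum) (rule int)
  also have "\<dots> = (\<Sum>k=1..m. 1 - poisson_cdf (k - 1) mu)"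
  proof (rule sum.cong[OF refl])
    fix k
    have ind: "integrable (measure_pmf (poisson_pmf mu)) (indicator {..k-1} :: nat \<Rightarrow> real)"
      by (rule pmf_integrable_bounded[where B=1]) (auto simp: indicator_def)
    have "measure_pmf.expectation (poisson_pmf mu) (\<lambda>n. 1 - indicator {..k-1} n)
          = 1 - measure_pmf.prob (poisson_pmf mu) {..k-1}"
      using ind by (subst Bochner_Integration.integral_diff) auto
    also have "measure_pmf.prob (poisson_pmf mu) {..k-1} = poisson_cdf (k-1) mu"
      using mu by (simp add: measure_measure_pmf_finite poisson_cdf_def sum_distrib_left mult.commute)
    finally show "measure_pmf.expectation (poisson_pmf mu) (\<lambda>n. 1 - indicator {..k-1} n) = 1 - poisson_cdf (k - 1) mu" .
  qed
  finally show ?thesis .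
qed

lemma poisson_mean_sums:
  assumes mu: "(mu::real) > 0"
  shows "(\<lambda>n. pmf (poisson_pmf mu) n * real n) sums mu"
proof -
  have "(\<lambda>n. mu ^ n / fact n) sums exp mu"
    using exp_converges[of mu] by (simp add: divide_inverse mult.commute)
  then have "(\<lambda>n. mu * exp (-mu) * (mu ^ n / fact n)) sums (mu * exp (-mu) * exp mu)"
    by (rule sums_mult)
  then have "(\<lambda>n. mu * exp (-mu) * (mu ^ n / fact n)) sums mu"
    by (simp add: exp_minus field_simps)
  moreover have "pmf (poisson_pmf mu) (Suc n) * real (Suc n) = mu * exp (-mu) * (mu ^ n / fact n)" for n
  proof -
    have f: "fact (Suc n) = real (Suc n) * fact n" by simp
    have "pmf (poisson_pmf mu) (Suc n) * real (Suc n) = mu ^ Suc n / (real (Suc n) * fact n) * exp (-mu) * real (Suc n)"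
      using mu by (simp only: pmf_poisson f)
    also have "\<dots> = mu * exp (-mu) * (mu ^ n / fact n)"
      by (simp add: field_simps del: of_nat_Suc)
    finally show ?thesis .
  qed
  ultimately have "(\<lambda>n. pmf (poisson_pmf mu) (Suc n) * real (Suc n)) sums mu" by simp
  then show ?thesis by (subst (asm) sums_Suc_iff) simp
qed

lemma poisson_min_le:
  assumes mu: "(mu::real) > 0"
  shows "measure_pmf.expectation (poisson_pmf mu) (\<lambda>n. real (min n c)) \<le> mu"
proof -
  have s: "(\<lambda>n. pmf (poisson_pmf mu) n * real n) sums mu" by (rule poisson_mean_sums[OF mu])
  have nn: "(\<integral>\<^sup>+n. ennreal (real n) \<partial>measure_pmf (poisson_pmf mu)) = ennreal mu"
  proof -
    have "(\<integral>\<^sup>+n. ennreal (real n) \<partial>measure_pmf (poisson_pmf mu))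
        = (\<integral>\<^sup>+n. ennreal (pmf (poisson_pmf mu) n * real n) \<partial>count_space UNIV)"
      by (simp add: nn_integral_measure_pmf ennreal_mult)
    also have "\<dots> = (\<Sum>n. ennreal (pmf (poisson_pmf mu) n * real n))"
      by (rule nn_integral_count_space_nat)
    also have "\<dots> = ennreal (\<Sum>n. pmf (poisson_pmf mu) n * real n)"
      using s by (intro suminf_ennreal2) (auto simp: sums_iff)
    also have "\<dots> = ennreal mu" using s by (simp add: sums_iff)
    finally show ?thesis .
  qed
  have "measure_pmf.expectation (poisson_pmf mu) (\<lambda>n. real (min n c))
        = enn2real (\<integral>\<^sup>+n. ennreal (real (min n c)) \<partial>measure_pmf (poisson_pmf mu))"
    by (rule integral_eq_nn_integral) auto
  also have "\<dots> \<le> enn2real (\<integral>\<^sup>+n. ennreal (real n) \<partial>measure_pmf (poisson_pmf mu))"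
    by (rule enn2real_mono) (force intro!: nn_integral_mono, simp add: nn)
  also have "\<dots> = mu" using mu by (simp add: nn)
  finally show ?thesis .
qed




definition pr_e :: "(('i \<times> nat) \<times> 'j) \<Rightarrow> 'i \<times> 'j" where
  "pr_e e = (fst (fst e), snd e)"

lemma realized_edges_finite:
  fixes N :: "'a \<Rightarrow> nat"
  assumes "finite E"
  shows "finite {((i, k), j). (i, j) \<in> E \<and> k < N i}"
proof -
  have "{((i, k), j). (i, j) \<in> E \<and> k < N i} = (\<lambda>(p,k). ((fst p, k), snd p)) ` (SIGMA p:E. {..<N (fst p)})"
    by (auto simp: image_iff; force)
  then show ?thesis using assms by (simp only:) (intro finite_imageI finite_SigmaI assms finite_lessThan)
qed

lemma rm_finite:
  assumes "finite E"
  shows "finite (realized_matchings E N)"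
  using realized_edges_finite[OF assms, of N]
  unfolding realized_matchings_def
  by (rule rev_finite_subset[OF finite_Pow_iff[THEN iffD2]]) auto

lemma rm_elem_finite:
  assumes "finite E" "M \<in> realized_matchings E N"
  shows "finite M"
  using assms realized_edges_finite[OF assms(1), of N] unfolding realized_matchings_def
  by (auto intro: finite_subset)

lemma rm_pr_in_E:
  assumes "M \<in> realized_matchings E N" "e \<in> M"
  shows "pr_e e \<in> E"
  using assms unfolding realized_matchings_def pr_e_def by auto

lemma count_bound:
  assumes fE: "finite E" and M: "M \<in> realized_matchings E N" and fS: "finite S" and fT: "finite T"
  shows "(\<Sum>i\<in>S. \<Sum>j\<in>T. real (card {e\<in>M. pr_e e = (i,j)})) \<le> real (card T)"
    and "(\<Sum>i\<in>S. \<Sum>j\<in>T. real (card {e\<in>M. pr_e e = (i,j)})) \<le> real (\<Sum>i\<in>S. N i)"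
proof -
  have fM: "finite M" by (rule rm_elem_finite[OF fE M])
  define A where "A = {e\<in>M. pr_e e \<in> S \<times> T}"
  have fA: "finite A" using fM by (simp add: A_def)
  have "(\<Sum>i\<in>S. \<Sum>j\<in>T. card {e\<in>M. pr_e e = (i,j)}) = (\<Sum>p\<in>S\<times>T. card {e\<in>M. pr_e e = p})"
    by (simp add: sum.cartesian_product)
  also have "\<dots> = (\<Sum>p\<in>S\<times>T. \<Sum>e\<in>{x. x \<in> A \<and> pr_e x = p}. 1)"
    by (intro sum.cong refl) (auto simp: A_def intro!: arg_cong[where f=card])
  also have "\<dots> = (\<Sum>e\<in>A. 1)"
    using fA fS fT by (intro sum.group) (auto simp: A_def)
  also have "\<dots> = card A" by simp
  finally have eq: "(\<Sum>i\<in>S. \<Sum>j\<in>T. real (card {e\<in>M. pr_e e = (i,j)})) = real (card A)"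
    by (metis (no_types, lifting) of_nat_sum sum.cong)
  have Msub: "M \<subseteq> {((i, k), j). (i, j) \<in> E \<and> k < N i}"
   and inj1: "\<forall>e\<in>M. \<forall>e'\<in>M. fst e = fst e' \<longrightarrow> e = e'"
   and inj2: "\<forall>e\<in>M. \<forall>e'\<in>M. snd e = snd e' \<longrightarrow> e = e'"
    using M by (auto simp: realized_matchings_def)
  have "card A \<le> card T"
  proof (rule card_inj_on_le[where f=snd])
    show "inj_on snd A" using inj2 by (auto simp: inj_on_def A_def)
    show "snd ` A \<subseteq> T" by (auto simp: A_def pr_e_def)
  qed (rule fT)
  then show "(\<Sum>i\<in>S. \<Sum>j\<in>T. real (card {e\<in>M. pr_e e = (i,j)})) \<le> real (card T)"
    using eq by simp
  have "card A \<le> card (SIGMA i:S. {..<N i})"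
  proof (rule card_inj_on_le[where f=fst])
    show "inj_on fst A" using inj1 by (auto simp: inj_on_def A_def)
    show "fst ` A \<subseteq> (SIGMA i:S. {..<N i})" using Msub by (auto simp: A_def pr_e_def)
  qed (use fS in simp)
  also have "\<dots> = (\<Sum>i\<in>S. N i)" using fS by simp
  finally show "(\<Sum>i\<in>S. \<Sum>j\<in>T. real (card {e\<in>M. pr_e e = (i,j)})) \<le> real (\<Sum>i\<in>S. N i)"
    using eq by (metis of_nat_le_iff)
qed

lemma weight_as_sum:
  assumes fE: "finite E" and M: "M \<in> realized_matchings E N"
  shows "(\<Sum>(i,j)\<in>E. w i j * real (card {e\<in>M. pr_e e = (i,j)})) = matching_weight w M"
proof -
  have fM: "finite M" by (rule rm_elem_finite[OF fE M])
  define h where "h e = w (fst (fst e)) (snd e)" for e :: "('a \<times> nat) \<times> 'b"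
  have "(\<Sum>(i,j)\<in>E. w i j * real (card {e\<in>M. pr_e e = (i,j)})) = (\<Sum>p\<in>E. \<Sum>e\<in>{x. x \<in> M \<and> pr_e x = p}. h e)"
  proof (rule sum.cong[OF refl])
    fix p assume "p \<in> E"
    obtain i j where p: "p = (i,j)" by (cases p)
    have "(\<Sum>e\<in>{x. x \<in> M \<and> pr_e x = p}. h e) = (\<Sum>e\<in>{x. x \<in> M \<and> pr_e x = p}. w i j)"
      by (intro sum.cong refl) (auto simp: h_def pr_e_def p)
    then show "(case p of (i,j) \<Rightarrow> w i j * real (card {e\<in>M. pr_e e = (i,j)})) = (\<Sum>e\<in>{x. x \<in> M \<and> pr_e x = p}. h e)"
      by (simp add: p mult.commute)
  qed
  also have "\<dots> = (\<Sum>e\<in>M. h e)"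
    using fM fE rm_pr_in_E[OF M] by (intro sum.group) auto
  also have "\<dots> = matching_weight w M"
    unfolding matching_weight_def h_def by (intro sum.cong refl) (auto split: prod.splits)
  finally show ?thesis .
qed




lemma arrival_sum_dist:
  assumes "finite I" "S \<subseteq> I" "S \<noteq> {}" "\<forall>i\<in>I. lam i > (0::real)"
  shows "map_pmf (\<lambda>N. \<Sum>i\<in>S. N i) (arrival_counts I lam) = poisson_pmf (\<Sum>i\<in>S. lam i)"
proof -
  have fS: "finite S" using assms finite_subset by blast
  have "map_pmf (\<lambda>N. \<Sum>i\<in>S. N i) (arrival_counts I lam)
      = map_pmf (\<lambda>N. \<Sum>i\<in>S. N i) (map_pmf (\<lambda>f x. if x \<in> S then f x else 0) (arrival_counts I lam))"
    by (simp add: pmf.map_comp o_def)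
  also have "\<dots> = map_pmf (\<lambda>N. \<Sum>i\<in>S. N i) (Pi_pmf S 0 (\<lambda>i. poisson_pmf (lam i)))"
    unfolding arrival_counts_def using assms by (subst Pi_pmf_subset[of I S]) auto
  also have "\<dots> = poisson_pmf (\<Sum>i\<in>S. lam i)"
    using assms fS by (intro sum_Pi_poisson) auto
  finally show ?thesis .
qed

lemma expect_min_sum:
  assumes "finite I" "S \<subseteq> I" "S \<noteq> {}" "\<forall>i\<in>I. lam i > (0::real)"
  shows "measure_pmf.expectation (arrival_counts I lam) (\<lambda>N. real (min (\<Sum>i\<in>S. N i) m))
       = (\<Sum>k=1..m. 1 - poisson_cdf (k - 1) (\<Sum>i\<in>S. lam i))"
proof -
  have fS: "finite S" using assms finite_subset by blast
  have pos: "(\<Sum>i\<in>S. lam i) > 0" using assms fS by (intro sum_pos) auto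
  have "measure_pmf.expectation (arrival_counts I lam) (\<lambda>N. real (min (\<Sum>i\<in>S. N i) m))
      = measure_pmf.expectation (map_pmf (\<lambda>N. \<Sum>i\<in>S. N i) (arrival_counts I lam)) (\<lambda>n. real (min n m))"
    by simp
  also have "\<dots> = (\<Sum>k=1..m. 1 - poisson_cdf (k - 1) (\<Sum>i\<in>S. lam i))"
    by (subst arrival_sum_dist[OF assms]) (rule poisson_min_expectation[OF pos])
  finally show ?thesis .
qed

lemma poisson_cdf_zero: "poisson_cdf k 0 = 1"
  by (induction k) (auto simp: poisson_cdf_def)

theorem mainTheorem7:
  fixes I :: "'i set" and J :: "'j set" and E :: "('i \<times> 'j) set"
    and w :: "'i \<Rightarrow> 'j \<Rightarrow> real" and lam :: "'i \<Rightarrow> real" and l :: nat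
  assumes "finite I" and "finite J" and "E \<subseteq> I \<times> J"
    and "\<forall>(i, j)\<in>E. w i j > 0"
    and "\<forall>i\<in>I. lam i > 0"
  shows "measure_pmf.expectation (arrival_counts I lam) (max_weight_matching E w)
           \<le> poisson_lp_opt I J E w lam l"
proof -
  note fI = assms(1) and fJ = assms(2) and EIJ = assms(3) and wpos = assms(4) and lpos = assms(5)
  have fE: "finite E" using fI fJ EIJ finite_subset by blast
  define P where "P = arrival_counts I lam"
  define Mopt where "Mopt N = (SOME M. M \<in> realized_matchings E N \<and> matching_weight w M = max_weight_matching E w N)" for N
  have Mopt: "Mopt N \<in> realized_matchings E N \<and> matching_weight w (Mopt N) = max_weight_matching E w N" for N
  proof -
    have ne: "{} \<in> realized_matchings E N" by (simp add: realized_matchings_def)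
    have "max_weight_matching E w N \<in> matching_weight w ` realized_matchings E N"
      unfolding max_weight_matching_def using rm_finite[OF fE, of N] ne by (intro Max_in) auto
    then obtain M where "M \<in> realized_matchings E N" "matching_weight w M = max_weight_matching E w N" by auto
    then have "\<exists>M. M \<in> realized_matchings E N \<and> matching_weight w M = max_weight_matching E w N" by blast
    then show ?thesis unfolding Mopt_def by (rule someI_ex)
  qed
  define X where "X i j N = real (card {e\<in>Mopt N. pr_e e = (i,j)})" for i j N
  have Xle1: "X i j N \<le> 1" for i j N
    using count_bound(1)[OF fE conjunct1[OF Mopt], of "{i}" "{j}" N] by (simp add: X_def)
  have Xint: "integrable (measure_pmf P) (X i j)" for i j
    by (rule pmf_integrable_bounded[where B=1]) (use Xle1 in \<open>auto simp: X_def\<close>)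
  define x where "x i j = measure_pmf.expectation P (X i j)" for i j
  have dsum: "(\<Sum>i\<in>S. \<Sum>j\<in>T. x i j) = measure_pmf.expectation P (\<lambda>N. \<Sum>i\<in>S. \<Sum>j\<in>T. X i j N)" for S T
  proof -
    have "(\<Sum>i\<in>S. \<Sum>j\<in>T. x i j) = (\<Sum>i\<in>S. measure_pmf.expectation P (\<lambda>N. \<Sum>j\<in>T. X i j N))"
      unfolding x_def by (intro sum.cong refl Bochner_Integration.integral_sum[symmetric] Xint)
    also have "\<dots> = measure_pmf.expectation P (\<lambda>N. \<Sum>i\<in>S. \<Sum>j\<in>T. X i j N)"
      by (intro Bochner_Integration.integral_sum[symmetric] Bochner_Integration.integrable_sum Xint)
    finally show ?thesis .
  qed
  have feas: "x \<in> poisson_lp_feasible I J E lam l"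
  proof -
    have c1: "\<forall>i j. x i j \<ge> 0"
      unfolding x_def X_def by (auto intro!: integral_nonneg_AE)
    have c2: "\<forall>i j. (i, j) \<notin> E \<longrightarrow> x i j = 0"
    proof (intro allI impI)
      fix i j assume nE: "(i, j) \<notin> E"
      have "X i j N = 0" for N
      proof -
        have "{e\<in>Mopt N. pr_e e = (i,j)} = {}"
          using rm_pr_in_E[OF conjunct1[OF Mopt], of _ N] nE by force
        then show ?thesis unfolding X_def by (metis card.empty of_nat_0)
      qed
      then have "X i j = (\<lambda>_. 0)" by auto
      then show "x i j = 0" by (simp add: x_def)
    qed
    have c3: "\<forall>i\<in>I. (\<Sum>j\<in>J. x i j) \<le> lam i"
    proof
      fix i assume iI: "i \<in> I"
      have "(\<Sum>j\<in>J. x i j) = (\<Sum>i'\<in>{i}. \<Sum>j\<in>J. x i' j)" by simp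
      also have "\<dots> = measure_pmf.expectation P (\<lambda>N. \<Sum>i'\<in>{i}. \<Sum>j\<in>J. X i' j N)" by (rule dsum)
      also have "\<dots> \<le> measure_pmf.expectation P (\<lambda>N. real (min (\<Sum>i'\<in>{i}. N i') (card J)))"
      proof (rule integral_mono)
        show "integrable (measure_pmf P) (\<lambda>N. \<Sum>i'\<in>{i}. \<Sum>j\<in>J. X i' j N)"
          by (intro Bochner_Integration.integrable_sum Xint)
        show "integrable (measure_pmf P) (\<lambda>N. real (min (\<Sum>i'\<in>{i}. N i') (card J)))"
          by (rule pmf_integrable_bounded[where B="real (card J)"]) auto
        fix N
        show "(\<Sum>i'\<in>{i}. \<Sum>j\<in>J. X i' j N) \<le> real (min (\<Sum>i'\<in>{i}. N i') (card J))"
          using count_bound[OF fE conjunct1[OF Mopt], of "{i}" J N] fJ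
          unfolding X_def by (simp only: of_nat_min min.bounded_iff) simp
      qed
      also have "\<dots> = (\<Sum>k=1..card J. 1 - poisson_cdf (k - 1) (\<Sum>i'\<in>{i}. lam i'))"
        unfolding P_def using iI fI lpos by (intro expect_min_sum) auto
      also have "\<dots> = measure_pmf.expectation (poisson_pmf (lam i)) (\<lambda>n. real (min n (card J)))"
        using iI lpos by (simp add: poisson_min_expectation)
      also have "\<dots> \<le> lam i" using iI lpos by (intro poisson_min_le) auto
      finally show "(\<Sum>j\<in>J. x i j) \<le> lam i" .
    qed
    have c4: "\<forall>j\<in>J. (\<Sum>i\<in>I. x i j) \<le> 1"
    proof
      fix j assume "j \<in> J"
      have "(\<Sum>i\<in>I. x i j) = (\<Sum>i\<in>I. \<Sum>j'\<in>{j}. x i j')" by simp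
      also have "\<dots> = measure_pmf.expectation P (\<lambda>N. \<Sum>i\<in>I. \<Sum>j'\<in>{j}. X i j' N)" by (rule dsum)
      also have "\<dots> \<le> measure_pmf.expectation P (\<lambda>N. 1)"
      proof (rule integral_mono)
        show "integrable (measure_pmf P) (\<lambda>N. \<Sum>i\<in>I. \<Sum>j'\<in>{j}. X i j' N)"
          by (intro Bochner_Integration.integrable_sum Xint)
        fix N
        show "(\<Sum>i\<in>I. \<Sum>j'\<in>{j}. X i j' N) \<le> 1"
          using count_bound(1)[OF fE conjunct1[OF Mopt], of I "{j}" N] fI
          unfolding X_def by simp
      qed simp
      also have "\<dots> = 1" by simp
      finally show "(\<Sum>i\<in>I. x i j) \<le> 1" .
    qed
    have c5: "\<forall>m. 1 \<le> m \<and> m \<le> l \<longrightarrow> (\<forall>S\<subseteq>I. \<forall>T\<subseteq>J. card T = m \<longrightarrow>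
                 (\<Sum>i\<in>S. \<Sum>j\<in>T. x i j) \<le>
                 (\<Sum>k=1..m. 1 - poisson_cdf (k - 1) (\<Sum>i\<in>S. lam i)))"
    proof (intro allI impI)
      fix m S T assume "1 \<le> m \<and> m \<le> l" and SI: "S \<subseteq> I" and TJ: "T \<subseteq> J" and cT: "card T = m"
      have fS: "finite S" using SI fI finite_subset by blast
      have fT: "finite T" using TJ fJ finite_subset by blast
      show "(\<Sum>i\<in>S. \<Sum>j\<in>T. x i j) \<le> (\<Sum>k=1..m. 1 - poisson_cdf (k - 1) (\<Sum>i\<in>S. lam i))"
      proof (cases "S = {}")
        case True
        then show ?thesis by (simp add: poisson_cdf_zero)
      next
        case False
        have "(\<Sum>i\<in>S. \<Sum>j\<in>T. x i j) = measure_pmf.expectation P (\<lambda>N. \<Sum>i\<in>S. \<Sum>j\<in>T. X i j N)" by (rule dsum)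
        also have "\<dots> \<le> measure_pmf.expectation P (\<lambda>N. real (min (\<Sum>i\<in>S. N i) m))"
        proof (rule integral_mono)
          show "integrable (measure_pmf P) (\<lambda>N. \<Sum>i\<in>S. \<Sum>j\<in>T. X i j N)"
            by (intro Bochner_Integration.integrable_sum Xint)
          show "integrable (measure_pmf P) (\<lambda>N. real (min (\<Sum>i\<in>S. N i) m))"
            by (rule pmf_integrable_bounded[where B="real m"]) auto
          fix N
          show "(\<Sum>i\<in>S. \<Sum>j\<in>T. X i j N) \<le> real (min (\<Sum>i\<in>S. N i) m)"
            using count_bound[OF fE conjunct1[OF Mopt], of S T N] fS fT cT
            unfolding X_def by (simp only: of_nat_min min.bounded_iff)
        qed
        also have "\<dots> = (\<Sum>k=1..m. 1 - poisson_cdf (k - 1) (\<Sum>i\<in>S. lam i))"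
          unfolding P_def using SI False fI lpos by (intro expect_min_sum) auto
        finally show ?thesis .
      qed
    qed
    show ?thesis unfolding poisson_lp_feasible_def using c1 c2 c3 c4 c5 by simp
  qed
  have obj: "measure_pmf.expectation P (max_weight_matching E w) = lp_objective E w x"
  proof -
    have "measure_pmf.expectation P (max_weight_matching E w)
        = measure_pmf.expectation P (\<lambda>N. \<Sum>(i,j)\<in>E. w i j * X i j N)"
      using weight_as_sum[OF fE conjunct1[OF Mopt]] Mopt unfolding X_def
      by (intro Bochner_Integration.integral_cong refl) simp
    also have "\<dots> = (\<Sum>p\<in>E. measure_pmf.expectation P (\<lambda>N. case p of (i,j) \<Rightarrow> w i j * X i j N))"
      by (rule Bochner_Integration.integral_sum) (auto split: prod.splits intro!: Xint)
    also have "\<dots> = lp_objective E w x"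
      unfolding lp_objective_def x_def by (intro sum.cong refl) (auto split: prod.splits)
    finally show ?thesis .
  qed
  have bdd: "bdd_above (lp_objective E w ` poisson_lp_feasible I J E lam l)"
  proof (rule bdd_aboveI2)
    fix y assume y: "y \<in> poisson_lp_feasible I J E lam l"
    show "lp_objective E w y \<le> (\<Sum>(i,j)\<in>E. w i j * lam i)"
      unfolding lp_objective_def
    proof (rule sum_mono)
      fix p assume pE: "p \<in> E"
      obtain i j where p: "p = (i,j)" by (cases p)
      have iI: "i \<in> I" and jJ: "j \<in> J" using pE EIJ p by auto
      have nn: "\<forall>i j. y i j \<ge> 0" and rs: "(\<Sum>j\<in>J. y i j) \<le> lam i"
        using y iI unfolding poisson_lp_feasible_def by auto
      have "y i j \<le> (\<Sum>j\<in>J. y i j)" using fJ jJ nn by (intro member_le_sum) auto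
      then have "y i j \<le> lam i" using rs by simp
      moreover have "w i j > 0" using wpos pE p by auto
      ultimately show "(case p of (i,j) \<Rightarrow> w i j * y i j) \<le> (case p of (i,j) \<Rightarrow> w i j * lam i)"
        by (simp add: p)
    qed
  qed
  have "measure_pmf.expectation P (max_weight_matching E w) \<le> poisson_lp_opt I J E w lam l"
    unfolding obj poisson_lp_opt_def by (rule cSUP_upper[OF feas bdd])
  then show ?thesis by (simp add: P_def)
qed


end
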